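(* Let $R$ be a ring such that $2$ is not invertible in $R$. Then $R$ is a GSWNC ring if and only if $R$ is a GSNC ring or $R$ is a strongly weakly nil-clean ring.
   Context: All rings are associative with identity. An element $a$ of a ring is strongly nil-clean if $a = e + q$ with $e$ idempotent, $q$ nilpotent and $eq = qe$; it is strongly weakly nil-clean if there exist an idempotent $e$ and a nilpotent $q$ with $eq = qe$ such that $a = q + e$ or $a = q - e$. A ring is strongly weakly nil-clean if all its elements are strongly weakly nil-clean; it is GSNC if every non-invertible element is strongly nil-clean, and GSWNC if every non-invertible element is strongly weakly nil-clean. *)

theory Defs
  imports Main
begin

definition idem :: "'a::ring_1 \<Rightarrow> bool" where
  "idem e \<longleftrightarrow> e * e = e"

definition nilp :: "'a::ring_1 \<Rightarrow> bool" where
  "nilp q \<longleftrightarrow> (\<exists>n::nat. q ^ n = 0)"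

definition invertible_elem :: "'a::ring_1 \<Rightarrow> bool" where
  "invertible_elem a \<longleftrightarrow> (\<exists>b. a * b = 1 \<and> b * a = 1)"

definition strongly_nil_clean_elem :: "'a::ring_1 \<Rightarrow> bool" where
  "strongly_nil_clean_elem a \<longleftrightarrow>
     (\<exists>e q. idem e \<and> nilp q \<and> e * q = q * e \<and> a = e + q)"

definition strongly_weakly_nil_clean_elem :: "'a::ring_1 \<Rightarrow> bool" where
  "strongly_weakly_nil_clean_elem a \<longleftrightarrow>
     (\<exists>e q. idem e \<and> nilp q \<and> e * q = q * e \<and> (a = q + e \<or> a = q - e))"

definition SWNC_ring :: "'a::ring_1 itself \<Rightarrow> bool" where
  "SWNC_ring _ \<longleftrightarrow> (\<forall>a::'a. strongly_weakly_nil_clean_elem a)"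

definition GSNC_ring :: "'a::ring_1 itself \<Rightarrow> bool" where
  "GSNC_ring _ \<longleftrightarrow> (\<forall>a::'a. \<not> invertible_elem a \<longrightarrow> strongly_nil_clean_elem a)"

definition GSWNC_ring :: "'a::ring_1 itself \<Rightarrow> bool" where
  "GSWNC_ring _ \<longleftrightarrow> (\<forall>a::'a. \<not> invertible_elem a \<longrightarrow> strongly_weakly_nil_clean_elem a)"

end

theory Submission
  imports Defs
begin

lemma comm_pow_mult:
  fixes x y :: "'a::ring_1"
  assumes "x * y = y * x"
  shows "(x * y) ^ n = x ^ n * y ^ n"
proof (induction n)
  case 0 then show ?case by simp
next
  case (Suc n)
  have c: "y ^ n * x = x * y ^ n"
    using power_commuting_commutes[of y x n] assms by simp
  have "(x * y) ^ Suc n = (x * y) ^ n * (x * y)" by (rule power_Suc2)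
  also have "\<dots> = x ^ n * y ^ n * (x * y)" by (simp only: Suc.IH)
  also have "\<dots> = x ^ n * (y ^ n * x) * y" by (simp only: mult.assoc)
  also have "\<dots> = x ^ n * (x * y ^ n) * y" by (simp only: c)
  also have "\<dots> = x ^ Suc n * y ^ Suc n" by (simp only: mult.assoc power_Suc2)
  finally show ?case .
qed

lemma nilp_add_aux:
  fixes x y :: "'a::ring_1"
  assumes xy: "x * y = y * x" and xa: "x ^ a = 0" and yb: "y ^ b = 0"
  shows "\<forall>i j. a + b \<le> i + j + n + 1 \<longrightarrow> x ^ i * (x + y) ^ n * y ^ j = 0"
proof (induction n)
  case 0
  show ?case
  proof (intro allI impI)
    fix i j assume h: "a + b \<le> i + j + 0 + 1"
    then have "a \<le> i \<or> b \<le> j" by arith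
    then show "x ^ i * (x + y) ^ 0 * y ^ j = 0"
    proof
      assume "a \<le> i"
      then have "x ^ i = x ^ a * x ^ (i - a)" by (simp flip: power_add)
      then show ?thesis using xa by simp
    next
      assume "b \<le> j"
      then have "y ^ j = y ^ b * y ^ (j - b)" by (simp flip: power_add)
      then show ?thesis using yb by simp
    qed
  qed
next
  case (Suc n)
  show ?case
  proof (intro allI impI)
    fix i j assume h: "a + b \<le> i + j + Suc n + 1"
    have c: "(x + y) ^ n * x = x * (x + y) ^ n"
      using power_commuting_commutes[of "x + y" x n] xy by (simp add: algebra_simps)
    have "x ^ i * (x + y) ^ Suc n * y ^ j = x ^ i * ((x + y) ^ n * (x + y)) * y ^ j"
      by (simp only: power_Suc2)
    also have "\<dots> = x ^ i * ((x + y) ^ n * x) * y ^ j + x ^ i * (x + y) ^ n * (y * y ^ j)"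
      by (simp only: distrib_left distrib_right mult.assoc)
    also have "\<dots> = x ^ i * (x * (x + y) ^ n) * y ^ j + x ^ i * (x + y) ^ n * y ^ Suc j"
      by (simp only: c power_Suc)
    also have "\<dots> = x ^ Suc i * (x + y) ^ n * y ^ j + x ^ i * (x + y) ^ n * y ^ Suc j"
      by (simp only: mult.assoc power_Suc2)
    also have "\<dots> = 0"
    proof -
      have "x ^ Suc i * (x + y) ^ n * y ^ j = 0" using Suc h by (metis add_Suc add_Suc_right add_Suc_shift)
      moreover have "x ^ i * (x + y) ^ n * y ^ Suc j = 0" using Suc h by (metis add_Suc add_Suc_right add_Suc_shift)
      ultimately show ?thesis by (simp only: add_0)
    qed
    finally show "x ^ i * (x + y) ^ Suc n * y ^ j = 0" .
  qed
qed

lemma nilp_add: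
  fixes x y :: "'a::ring_1"
  assumes "x * y = y * x" "nilp x" "nilp y"
  shows "nilp (x + y)"
proof -
  obtain a b where xa: "x ^ a = 0" and yb: "y ^ b = 0" using assms unfolding nilp_def by blast
  have "x ^ 0 * (x + y) ^ (a + b) * y ^ 0 = 0"
  proof -
    have "\<forall>i j. a + b \<le> i + j + (a + b) + 1 \<longrightarrow> x ^ i * (x + y) ^ (a + b) * y ^ j = 0"
      using nilp_add_aux[OF assms(1) xa yb, of "a + b"] .
    then have "a + b \<le> 0 + 0 + (a + b) + 1 \<longrightarrow> x ^ 0 * (x + y) ^ (a + b) * y ^ 0 = 0" by blast
    then show ?thesis by linarith
  qed
  then have "(x + y) ^ (a + b) = 0" by simp
  then show ?thesis unfolding nilp_def by blast
qed

lemma nilp_uminus: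
  fixes x :: "'a::ring_1"
  assumes "nilp x" shows "nilp (- x)"
proof -
  obtain n where "x ^ n = 0" using assms unfolding nilp_def by blast
  then have "(- x) ^ n = 0" using power_minus[of x n] by (simp del: power_minus)
  then show ?thesis unfolding nilp_def by blast
qed

lemma nilp_mult:
  fixes x y :: "'a::ring_1"
  assumes "x * y = y * x" "nilp y"
  shows "nilp (x * y)"
proof -
  obtain n where "y ^ n = 0" using assms unfolding nilp_def by blast
  then have "(x * y) ^ n = 0" using comm_pow_mult[OF assms(1), of n] by simp
  then show ?thesis unfolding nilp_def by blast
qed

lemma idem_pow:
  fixes f :: "'a::ring_1"
  assumes "idem f" shows "f ^ Suc n = f"
proof (induction n)
  case 0 then show ?case by simp
next
  case (Suc n)
  have "f ^ Suc (Suc n) = f ^ Suc n * f" by (rule power_Suc2)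
  also have "\<dots> = f * f" by (simp only: Suc.IH)
  also have "\<dots> = f" using assms unfolding idem_def .
  finally show ?case .
qed

lemma snc_of_2:
  fixes a :: "'a::ring_1"
  assumes n2: "nilp (2::'a)" and s: "strongly_weakly_nil_clean_elem a"
  shows "strongly_nil_clean_elem a"
proof -
  obtain e q where h: "idem e" "nilp q" "e * q = q * e" "a = q + e \<or> a = q - e"
    using s unfolding strongly_weakly_nil_clean_elem_def by blast
  show ?thesis
  proof (cases "a = q + e")
    case True then show ?thesis using h unfolding strongly_nil_clean_elem_def
      by (metis add.commute)
  next
    case False
    then have a: "a = q - e" using h by blast
    have n2e: "nilp (2 * e)" using nilp_mult[of e 2] n2 by (simp add: mult_2 mult_2_right)
    have nm: "nilp (- (2 * e))" using nilp_uminus[OF n2e] .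
    have cq: "q * (- (2 * e)) = - (2 * e) * q" using h(3)
      by (simp add: mult_2 algebra_simps)
    have nq: "nilp (q - 2 * e)" using nilp_add[OF cq h(2) nm] by simp
    have ce: "e * (q - 2 * e) = (q - 2 * e) * e" using h(3)
      by (simp add: mult_2 algebra_simps)
    have "a = e + (q - 2 * e)" using a by (simp add: mult_2 algebra_simps)
    then show ?thesis unfolding strongly_nil_clean_elem_def using h(1) nq ce by blast
  qed
qed

lemma proj:
  fixes p x :: "'a::ring_1"
  assumes ip: "idem p" and cp: "\<forall>z. p * z = z * p"
    and s: "strongly_weakly_nil_clean_elem x" and px: "p * x = x"
  shows "\<exists>Q F. idem F \<and> nilp Q \<and> Q * F = F * Q \<and> p * Q = Q \<and> p * F = F \<and>
           (x = Q + F \<or> x = Q - F)"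
proof -
  obtain f q where h: "idem f" "nilp q" "f * q = q * f" "x = q + f \<or> x = q - f"
    using s unfolding strongly_weakly_nil_clean_elem_def by blast
  have pp: "p * p = p" using ip unfolding idem_def .
  have i1: "idem (p * f)" using h(1) pp cp unfolding idem_def
    by (metis mult.assoc)
  have n1: "nilp (p * q)" using nilp_mult[of p q] cp h(2) by blast
  have c1: "(p * q) * (p * f) = (p * f) * (p * q)"
    by (metis cp h(3) mult.assoc)
  have e1: "p * (p * q) = p * q" "p * (p * f) = p * f" using pp by (simp_all add: mult.assoc[symmetric])
  have "x = p * q + p * f \<or> x = p * q - p * f"
    using h(4) px by (metis distrib_left right_diff_distrib)
  then show ?thesis using i1 n1 c1 e1 by blast
qed

lemma flip:
  fixes p x Q F :: "'a::ring_1"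
  assumes cp: "\<forall>z. p * z = z * p" and n2: "nilp (2 * p)"
    and i: "idem F" and n: "nilp Q" and c: "Q * F = F * Q" and pQ: "p * Q = Q" and pF: "p * F = F"
    and x: "x = Q + F \<or> x = Q - F"
  shows "\<exists>Q'. nilp Q' \<and> Q' * F = F * Q' \<and> p * Q' = Q' \<and> x = Q' + F"
    "\<exists>Q'. nilp Q' \<and> Q' * F = F * Q' \<and> p * Q' = Q' \<and> x = Q' - F"
proof -
  have F2: "2 * F = (2 * p) * F" using pF by (simp add: mult.assoc)
  have n2F: "nilp (2 * F)" unfolding F2 using nilp_mult[of F "2 * p"] n2 cp
    by (metis mult_2 mult_2_right distrib_left distrib_right)
  have c2: "Q * (2 * F) = (2 * F) * Q" using c by (simp add: mult_2 mult_2_right algebra_simps)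
  have cm: "Q * (- (2 * F)) = (- (2 * F)) * Q" using c2 by simp
  have na: "nilp (Q + 2 * F)" using nilp_add[OF c2 n n2F] .
  have nb: "nilp (Q - 2 * F)" using nilp_add[OF cm n nilp_uminus[OF n2F]] by simp
  have ca: "(Q + 2 * F) * F = F * (Q + 2 * F)" using c by (simp add: mult_2 mult_2_right algebra_simps)
  have cb: "(Q - 2 * F) * F = F * (Q - 2 * F)" using c by (simp add: mult_2 mult_2_right algebra_simps)
  have pa: "p * (Q + 2 * F) = Q + 2 * F" using pQ pF by (simp add: mult_2 mult_2_right algebra_simps)
  have pb: "p * (Q - 2 * F) = Q - 2 * F" using pQ pF by (simp add: mult_2 mult_2_right algebra_simps)
  show "\<exists>Q'. nilp Q' \<and> Q' * F = F * Q' \<and> p * Q' = Q' \<and> x = Q' + F"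
  proof (cases "x = Q + F")
    case True then show ?thesis using n c pQ by blast
  next
    case False
    then have "x = (Q - 2 * F) + F" using x by (simp add: mult_2 algebra_simps)
    then show ?thesis using nb cb pb by blast
  qed
  show "\<exists>Q'. nilp Q' \<and> Q' * F = F * Q' \<and> p * Q' = Q' \<and> x = Q' - F"
  proof (cases "x = Q - F")
    case True then show ?thesis using n c pQ by blast
  next
    case False
    then have "x = (Q + 2 * F) - F" using x by (simp add: mult_2 algebra_simps)
    then show ?thesis using na ca pa by blast
  qed
qed

lemma orth:
  fixes p X Y :: "'a::ring_1"
  assumes ip: "idem p" and cp: "\<forall>z. p * z = z * p" and pX: "p * X = X" and pY: "(1 - p) * Y = Y"
  shows "X * Y = 0" "Y * X = 0"
proof -
  have pp: "p * (1 - p) = 0" "(1 - p) * p = 0" using ip unfolding idem_def by (simp_all add: algebra_simps)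
  have "X * Y = p * (X * (1 - p)) * Y" using pX pY by (metis mult.assoc)
  also have "\<dots> = p * ((1 - p) * X) * Y"
  proof -
    have "p * X = X * p" using cp by blast
    then have "X * (1 - p) = (1 - p) * X" by (simp add: algebra_simps)
    then show ?thesis by simp
  qed
  also have "\<dots> = 0" using pp by (simp add: mult.assoc[symmetric])
  finally show "X * Y = 0" .
  have "Y * X = (1 - p) * (Y * p) * X" using pX pY by (metis mult.assoc)
  also have "\<dots> = (1 - p) * (p * Y) * X" using cp[rule_format, of Y] by simp
  also have "\<dots> = 0" using pp by (simp add: mult.assoc[symmetric])
  finally show "Y * X = 0" .
qed

lemma combine:
  fixes p Q1 F1 Q2 F2 :: "'a::ring_1"
  assumes ip: "idem p" and cp: "\<forall>z. p * z = z * p"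
    and i1: "idem F1" and n1: "nilp Q1" and c1: "Q1 * F1 = F1 * Q1" and pQ1: "p * Q1 = Q1" and pF1: "p * F1 = F1"
    and i2: "idem F2" and n2: "nilp Q2" and c2: "Q2 * F2 = F2 * Q2" and pQ2: "(1 - p) * Q2 = Q2" and pF2: "(1 - p) * F2 = F2"
  shows "idem (F1 + F2)" "nilp (Q1 + Q2)" "(Q1 + Q2) * (F1 + F2) = (F1 + F2) * (Q1 + Q2)"
proof -
  note o1 = orth[OF ip cp pF1 pF2] and o2 = orth[OF ip cp pQ1 pQ2]
    and o3 = orth[OF ip cp pQ1 pF2] and o4 = orth[OF ip cp pF1 pQ2]
  show "idem (F1 + F2)" using i1 i2 o1 unfolding idem_def by (simp add: algebra_simps)
  show "nilp (Q1 + Q2)" using nilp_add[of Q1 Q2] o2 n1 n2 by simp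
  show "(Q1 + Q2) * (F1 + F2) = (F1 + F2) * (Q1 + Q2)" using c1 c2 o3 o4 by (simp add: algebra_simps)
qed

lemma swnc_all:
  fixes e a :: "'a::ring_1"
  assumes ie: "idem e" and ce: "\<forall>z. e * z = z * e" and e0: "e \<noteq> 0" and e1: "e \<noteq> 1"
    and n2: "nilp (2 * (1 - e))"
    and G: "\<forall>a::'a. \<not> invertible_elem a \<longrightarrow> strongly_weakly_nil_clean_elem a"
  shows "strongly_weakly_nil_clean_elem a"
proof -
  have ee: "e * e = e" using ie unfolding idem_def .
  have ie': "idem (1 - e)" using ee unfolding idem_def by (simp add: algebra_simps)
  have ce': "\<forall>z. (1 - e) * z = z * (1 - e)"
  proof
    fix z
    have "e * z = z * e" using ce by blast
    then show "(1 - e) * z = z * (1 - e)" by (simp add: algebra_simps)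
  qed
  have pp: "e * (1 - e) = 0" "(1 - e) * e = 0" using ee by (simp_all add: algebra_simps)
  have ni1: "\<not> invertible_elem (e * a)"
  proof
    assume "invertible_elem (e * a)"
    then obtain b where "b * (e * a) = 1" unfolding invertible_elem_def by blast
    then have "1 - e = b * (e * a) * (1 - e)" by simp
    also have "\<dots> = b * (a * e) * (1 - e)" using ce[rule_format, of a] by simp
    also have "\<dots> = 0" using pp by (simp add: mult.assoc)
    finally show False using e1 by simp
  qed
  have ni2: "\<not> invertible_elem ((1 - e) * a)"
  proof
    assume "invertible_elem ((1 - e) * a)"
    then obtain b where "b * ((1 - e) * a) = 1" unfolding invertible_elem_def by blast
    then have "e = b * ((1 - e) * a) * e" by simp
    also have "\<dots> = b * (a * (1 - e)) * e" using ce'[rule_format, of a] by simp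
    also have "\<dots> = 0" using pp by (simp add: mult.assoc)
    finally show False using e0 by simp
  qed
  have px1: "e * (e * a) = e * a" using ee by (simp add: mult.assoc[symmetric])
  have px2: "(1 - e) * ((1 - e) * a) = (1 - e) * a" using ie' unfolding idem_def by (simp add: mult.assoc[symmetric])
  obtain Q1 F1 where h1: "idem F1" "nilp Q1" "Q1 * F1 = F1 * Q1" "e * Q1 = Q1" "e * F1 = F1"
    "e * a = Q1 + F1 \<or> e * a = Q1 - F1"
    using proj[OF ie ce G[rule_format, OF ni1] px1] by blast
  obtain Q2 F2 where h2: "idem F2" "nilp Q2" "Q2 * F2 = F2 * Q2" "(1 - e) * Q2 = Q2" "(1 - e) * F2 = F2"
    "(1 - e) * a = Q2 + F2 \<or> (1 - e) * a = Q2 - F2"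
    using proj[OF ie' ce' G[rule_format, OF ni2] px2] by blast
  have aa: "a = e * a + (1 - e) * a" by (simp add: algebra_simps)
  note fl = flip[OF ce' n2 h2]
  show ?thesis
  proof (cases "e * a = Q1 + F1")
    case True
    obtain Q' where q: "nilp Q'" "Q' * F2 = F2 * Q'" "(1 - e) * Q' = Q'" "(1 - e) * a = Q' + F2"
      using fl(1) by blast
    note cb = combine[OF ie ce h1(1-5) h2(1) q(1,2,3) h2(5)]
    have "a = (Q1 + Q') + (F1 + F2)" using aa True q(4) by (simp add: algebra_simps)
    then show ?thesis using cb(1,2) cb(3)[symmetric] unfolding strongly_weakly_nil_clean_elem_def by blast
  next
    case False
    then have m: "e * a = Q1 - F1" using h1(6) by blast
    obtain Q' where q: "nilp Q'" "Q' * F2 = F2 * Q'" "(1 - e) * Q' = Q'" "(1 - e) * a = Q' - F2"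
      using fl(2) by blast
    note cb = combine[OF ie ce h1(1-5) h2(1) q(1,2,3) h2(5)]
    have "a = (Q1 + Q') - (F1 + F2)" using aa m q(4) by (simp add: algebra_simps)
    then show ?thesis using cb(1,2) cb(3)[symmetric] unfolding strongly_weakly_nil_clean_elem_def by blast
  qed
qed

lemma fwd_case:
  fixes dummy :: "'a::ring_1"
  assumes n2: "\<not> invertible_elem (2::'a)" and nn: "\<not> nilp (2::'a)"
    and G: "\<forall>a::'a. \<not> invertible_elem a \<longrightarrow> strongly_weakly_nil_clean_elem a"
  shows "\<forall>a::'a. strongly_weakly_nil_clean_elem a"
proof -
  obtain e q :: 'a where h: "idem e" "nilp q" "e * q = q * e" "2 = q + e \<or> 2 = q - e"
    using G n2 unfolding strongly_weakly_nil_clean_elem_def by blast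
  have ee: "e * e = e" using h(1) unfolding idem_def .
  have notplus: "2 \<noteq> q + e"
  proof
    assume p: "2 = q + e"
    then have qq: "q = 2 - e" by (simp add: algebra_simps)
    have eq: "e * q = e" unfolding qq using ee by (simp add: algebra_simps mult_2_right)
    have "\<forall>k. e * q ^ k = e"
    proof
      fix k show "e * q ^ k = e"
        by (induction k) (simp_all add: power_Suc2 mult.assoc[symmetric] eq)
    qed
    moreover obtain k where "q ^ k = 0" using h(2) unfolding nilp_def by blast
    ultimately have "e = 0" by (metis mult_zero_right)
    then show False using p h(2) nn by simp
  qed
  then have qd: "q = 2 + e" using h(4) by (simp add: algebra_simps)
  have e0: "e \<noteq> 0" using qd h(2) nn by auto
  obtain m where "q ^ m = 0" using h(2) unfolding nilp_def by blast
  then have qN: "q ^ Suc m = 0" by (simp add: power_Suc2)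
  define N where "N = Suc m"
  have t3: "(3::'a) * e = 2 * e + e"
  proof -
    have "(3::'a) = 2 + 1" by simp
    then show ?thesis by (metis distrib_right mult_1)
  qed
  have "e * q = e * 2 + e * e" unfolding qd by (simp only: distrib_left)
  also have "\<dots> = 2 * e + e" using ee by (simp only: mult_2 mult_2_right)
  finally have eq3: "e * q = 3 * e" using t3 by simp
  have eq2: "(1 - e) * q = 2 * (1 - e)" unfolding qd using ee by (simp add: algebra_simps mult_2_right mult_2)
  have p3: "e * q ^ k = 3 ^ k * e" for k
  proof (induction k)
    case 0 then show ?case by simp
  next
    case (Suc k)
    have "e * q ^ Suc k = (e * q ^ k) * q" by (simp only: power_Suc2 mult.assoc)
    also have "\<dots> = (3 ^ k * e) * q" by (simp only: Suc.IH)
    also have "\<dots> = 3 ^ k * (e * q)" by (simp only: mult.assoc)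
    also have "\<dots> = 3 ^ k * (3 * e)" by (simp only: eq3)
    also have "\<dots> = 3 ^ Suc k * e" by (simp only: power_Suc2 mult.assoc)
    finally show ?case .
  qed
  have p2: "(1 - e) * q ^ k = 2 ^ k * (1 - e)" for k
  proof (induction k)
    case 0 then show ?case by simp
  next
    case (Suc k)
    have "(1 - e) * q ^ Suc k = ((1 - e) * q ^ k) * q" by (simp only: power_Suc2 mult.assoc)
    also have "\<dots> = (2 ^ k * (1 - e)) * q" by (simp only: Suc.IH)
    also have "\<dots> = 2 ^ k * ((1 - e) * q)" by (simp only: mult.assoc)
    also have "\<dots> = 2 ^ k * (2 * (1 - e))" by (simp only: eq2)
    also have "\<dots> = 2 ^ Suc k * (1 - e)" by (simp only: power_Suc2 mult.assoc)
    finally show ?case .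
  qed
  have z3: "3 ^ N * e = 0" using p3[of N] qN N_def by simp
  have z2: "2 ^ N * (1 - e) = 0" using p2[of N] qN N_def by simp
  have cop: "coprime ((3::int) ^ N) (2 ^ N)" by simp
  obtain u v :: int where uv: "u * 3 ^ N + v * 2 ^ N = 1"
    using bezout_int[of "3 ^ N" "2 ^ N"] cop by (metis coprime_iff_gcd_eq_1)
  have one: "(of_int u * 3 ^ N + of_int v * 2 ^ N :: 'a) = 1"
    using arg_cong[OF uv, of "of_int :: int \<Rightarrow> 'a"] by simp
  have "e = (of_int u * 3 ^ N + of_int v * 2 ^ N) * e" using one by simp
  also have "\<dots> = of_int u * (3 ^ N * e) + of_int v * 2 ^ N * e" by (simp add: algebra_simps)
  also have "\<dots> = of_int v * 2 ^ N * e" using z3 by simp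
  finally have e_a: "e = of_int v * 2 ^ N * e" .
  have "(of_int v * 2 ^ N :: 'a) = of_int v * 2 ^ N * e + of_int v * (2 ^ N * (1 - e))"
    by (simp add: algebra_simps)
  also have "\<dots> = e" using e_a z2 by simp
  finally have e_int: "e = of_int (v * 2 ^ N)" by simp
  have ce: "\<forall>z. e * z = z * e" using e_int mult_of_int_commute by metis
  have e1: "e \<noteq> 1"
  proof
    assume "e = 1"
    then have o: "(1::'a) = of_int v * 2 ^ N" using e_int by simp
    have "(2::'a) * (of_int v * 2 ^ m) = 1" using o N_def
      by (metis mult.assoc mult.commute mult_of_int_commute power_Suc)
    moreover have "(of_int v * 2 ^ m) * (2::'a) = 1" using o N_def
      by (metis mult.assoc power_Suc2)
    ultimately show False using n2 unfolding invertible_elem_def by blast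
  qed
  have ie': "idem (1 - e)" using ee unfolding idem_def by (simp add: algebra_simps)
  have c21: "2 * (1 - e) = (1 - e) * (2::'a)" by (simp add: mult_2 mult_2_right)
  have "(2 * (1 - e)) ^ N = 2 ^ N * (1 - e) ^ N" using comm_pow_mult[OF c21] by simp
  also have "\<dots> = 2 ^ N * (1 - e)" using idem_pow[OF ie'] N_def by simp
  also have "\<dots> = 0" using z2 .
  finally have "nilp (2 * (1 - e))" unfolding nilp_def by blast
  then show ?thesis using swnc_all[OF h(1) ce e0 e1 _ G] by blast
qed

theorem lemma2p56:
  assumes "\<not> invertible_elem (2::'a::ring_1)"
  shows "GSWNC_ring TYPE('a) \<longleftrightarrow> (GSNC_ring TYPE('a) \<or> SWNC_ring TYPE('a))"
proof
  assume G: "GSWNC_ring TYPE('a)"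
  then have G': "\<forall>a::'a. \<not> invertible_elem a \<longrightarrow> strongly_weakly_nil_clean_elem a"
    unfolding GSWNC_ring_def .
  show "GSNC_ring TYPE('a) \<or> SWNC_ring TYPE('a)"
  proof (cases "nilp (2::'a)")
    case True
    then have "GSNC_ring TYPE('a)" using G' snc_of_2 unfolding GSNC_ring_def by blast
    then show ?thesis ..
  next
    case False
    then have "SWNC_ring TYPE('a)" using fwd_case[OF assms False G'] unfolding SWNC_ring_def by blast
    then show ?thesis ..
  qed
next
  assume "GSNC_ring TYPE('a) \<or> SWNC_ring TYPE('a)"
  then show "GSWNC_ring TYPE('a)"
  proof
    assume "GSNC_ring TYPE('a)"
    then show ?thesis unfolding GSNC_ring_def GSWNC_ring_def strongly_nil_clean_elem_def
      strongly_weakly_nil_clean_elem_def by (metis add.commute)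
  next
    assume "SWNC_ring TYPE('a)"
    then show ?thesis unfolding SWNC_ring_def GSWNC_ring_def by blast
  qed
qed

end
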